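(* The functions $G_1(\zeta)=\sum_{n=0}^\infty A_n\zeta^{4+n}$ and $G_2(\zeta)=\sum_{n=0}^\infty B_n\zeta^{n-3}$ are two linearly independent solutions on the circle $\{|\zeta|=r\}$ of $G''+12Y_0G=0$, where $Y_0(\zeta)=-\zeta^{-2}+\zeta^2P(\zeta)$, and their Wronskian is $G_1G_2'-G_2G_1'=-7$.
   Context: $r=\tfrac{7}{10}$, $x_0=-\tfrac{770766}{323285}$; $a_0=-x_0/10$, $a_1=-1/6$, $a_2=\tfrac{19949}{321055}$, $a_3=0$, $a_n=-\tfrac{6}{(n+5)(n-2)}\sum_{k=0}^{n-4}a_ka_{n-4-k}$ for $4\le n\le17$, and $P(\zeta)=\sum_{n=0}^{17}a_n\zeta^n$. $A_0=1$, $A_1=A_2=A_3=0$, $A_n=-\tfrac{12}{n(n+7)}\sum_{k=0}^{\min\{n-4,17\}}a_kA_{n-4-k}$ ($n\ge4$); $B_0=1$, $B_1=B_2=B_3=B_7=0$, $B_n=-\tfrac{12}{n(n-7)}\sum_{k=0}^{\min\{n-4,17\}}a_kB_{n-4-k}$ ($n\ge4$, $n\neq7$). *)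

theory Defs
  imports "HOL-Analysis.Analysis"
begin

definition r6 :: real where "r6 = 7/10"

definition x0 :: real where "x0 = - 770766 / 323285"

text \<open>Coefficients a_n for n \<le> 17 as in the paper; set to 0 for n > 17 (never used there).\<close>
fun acoef :: "nat \<Rightarrow> real" where
  "acoef n =
     (if n = 0 then - x0 / 10
      else if n = 1 then - 1 / 6
      else if n = 2 then 19949 / 321055
      else if n = 3 then 0
      else if n \<le> 17 then
        - 6 / ((real n + 5) * (real n - 2)) * (\<Sum>k = 0..n - 4. acoef k * acoef (n - 4 - k))
      else 0)"

definition Ppoly :: "complex \<Rightarrow> complex" where
  "Ppoly z = (\<Sum>n = 0..17. complex_of_real (acoef n) * z ^ n)"

fun Acoef :: "nat \<Rightarrow> real" where
  "Acoef n =
     (if n = 0 then 1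
      else if n < 4 then 0
      else - 12 / (real n * (real n + 7)) *
             (\<Sum>k = 0..min (n - 4) 17. acoef k * Acoef (n - 4 - k)))"

fun Bcoef :: "nat \<Rightarrow> real" where
  "Bcoef n =
     (if n = 0 then 1
      else if n < 4 \<or> n = 7 then 0
      else - 12 / (real n * (real n - 7)) *
             (\<Sum>k = 0..min (n - 4) 17. acoef k * Bcoef (n - 4 - k)))"

definition Y0 :: "complex \<Rightarrow> complex" where
  "Y0 z = - 1 / z ^ 2 + z ^ 2 * Ppoly z"

definition G1 :: "complex \<Rightarrow> complex" where
  "G1 z = (\<Sum>n. complex_of_real (Acoef n) * z ^ (4 + n))"

definition G2 :: "complex \<Rightarrow> complex" where
  "G2 z = (\<Sum>n. complex_of_real (Bcoef n) * z powi (int n - 3))"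

end

theory Submission imports Defs "HOL-Complex_Analysis.Complex_Analysis" begin
declare acoef.simps[simp del] Acoef.simps[simp del] Bcoef.simps[simp del]

lemma a0: "acoef 0 = 385383/1616425" by (subst acoef.simps) (simp add: x0_def)
lemma a1: "acoef 1 = -1/6" by (subst acoef.simps) simp
lemma a2: "acoef 2 = 19949/321055" by (subst acoef.simps) simp
lemma a3: "acoef 3 = 0" by (subst acoef.simps) simp
lemma a1s: "acoef (Suc 0) = -1/6" using a1 by simp
lemma a2s: "acoef (Suc (Suc 0)) = 19949/321055" using a2 by (simp add: numeral_2_eq_2)
lemma a3s: "acoef (Suc (Suc (Suc 0))) = 0" using a3 by (simp add: numeral_3_eq_3)
lemma a_rec: "4 \<le> n \<Longrightarrow> n \<le> 17 \<Longrightarrow> acoef n = - 6 / ((real n + 5) * (real n - 2)) * (\<Sum>k = 0..n - 4. acoef k * acoef (n - 4 - k))"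
  by (subst acoef.simps) simp
lemma a_big: "17 < n \<Longrightarrow> acoef n = 0"
  by (subst acoef.simps) simp

lemma a_quarter: "\<bar>acoef n\<bar> \<le> 1/4"
proof (induction n rule: less_induct)
  case (less n)
  show ?case
  proof (cases "n \<le> 3")
    case True
    then have "n = 0 \<or> n = 1 \<or> n = 2 \<or> n = 3" by auto
    then show ?thesis using a0 a1 a2 a3 by auto
  next
    case False
    show ?thesis
    proof (cases "n \<le> 17")
      case False thus ?thesis using a_big by simp
    next
      case True
      have n4: "4 \<le> n" using \<open>\<not> n \<le> 3\<close> by simp
      have "\<bar>\<Sum>k = 0..n - 4. acoef k * acoef (n - 4 - k)\<bar> \<le> (\<Sum>k = 0..n - 4. \<bar>acoef k * acoef (n - 4 - k)\<bar>)"
        by (rule sum_abs)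
      also have "\<dots> \<le> (\<Sum>k = 0..n - 4. 1/16)"
      proof (rule sum_mono)
        fix k assume k: "k \<in> {0..n-4}"
        have "\<bar>acoef k\<bar> \<le> 1/4" using less k n4 by simp
        moreover have "\<bar>acoef (n-4-k)\<bar> \<le> 1/4" using less k n4 by simp
        ultimately show "\<bar>acoef k * acoef (n - 4 - k)\<bar> \<le> 1/16"
          unfolding abs_mult using mult_mono[of "\<bar>acoef k\<bar>" "1/4" "\<bar>acoef (n-4-k)\<bar>" "1/4"] by simp
      qed
      also have "\<dots> = (real n - 3) / 16" using n4 by (simp add: of_nat_diff)
      finally have S: "\<bar>\<Sum>k = 0..n - 4. acoef k * acoef (n - 4 - k)\<bar> \<le> (real n - 3) / 16" .
      have pos: "(real n + 5) * (real n - 2) > 0" using n4 by simp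
      have "\<bar>acoef n\<bar> = 6 / ((real n + 5) * (real n - 2)) * \<bar>\<Sum>k = 0..n - 4. acoef k * acoef (n - 4 - k)\<bar>"
        using a_rec[OF n4 True] pos n4 by (simp add: abs_mult abs_of_pos)
      also have "\<dots> \<le> 6 / ((real n + 5) * (real n - 2)) * ((real n - 3) / 16)"
        using S pos by (intro mult_left_mono) auto
      also have "\<dots> \<le> 1/4"
      proof -
        have x4: "real n \<ge> 4" using n4 by simp
        have "real n * real n \<ge> 4 * real n" using x4 by (intro mult_right_mono) auto
        moreover have "4 * ((real n + 5) * (real n - 2)) - 6 * (real n - 3) = 4 * (real n * real n) + 6 * real n - 22"
          by (simp add: algebra_simps)
        ultimately have "6 * (real n - 3) \<le> 4 * ((real n + 5) * (real n - 2))" using x4 by linarith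
        thus ?thesis using pos by (simp add: field_simps)
      qed
      finally show ?thesis .
    qed
  qed
qed

definition sA where "sA = (\<Sum>k=0..17. \<bar>acoef k\<bar>)"

lemma a_lin: "4 \<le> n \<Longrightarrow> n \<le> 17 \<Longrightarrow> \<bar>acoef n\<bar> \<le> 3 / (2 * ((real n + 5) * (real n - 2))) * sA"
proof -
  assume n4: "4 \<le> n" and n17: "n \<le> 17"
  have "\<bar>\<Sum>k = 0..n - 4. acoef k * acoef (n - 4 - k)\<bar> \<le> (\<Sum>k = 0..n - 4. \<bar>acoef k * acoef (n - 4 - k)\<bar>)"
    by (rule sum_abs)
  also have "\<dots> \<le> (\<Sum>k = 0..n - 4. \<bar>acoef k\<bar> * (1/4))"
  proof (rule sum_mono)
    fix k
    show "\<bar>acoef k * acoef (n - 4 - k)\<bar> \<le> \<bar>acoef k\<bar> * (1/4)"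
      unfolding abs_mult by (rule mult_left_mono[OF a_quarter abs_ge_zero])
  qed
  also have "\<dots> \<le> (\<Sum>k = 0..17. \<bar>acoef k\<bar> * (1/4))"
    using n17 by (intro sum_mono2) auto
  also have "\<dots> = sA / 4" by (simp add: sA_def sum_divide_distrib)
  finally have S: "\<bar>\<Sum>k = 0..n - 4. acoef k * acoef (n - 4 - k)\<bar> \<le> sA / 4" .
  have pos: "(real n + 5) * (real n - 2) > 0" using n4 by simp
  have "\<bar>acoef n\<bar> = 6 / ((real n + 5) * (real n - 2)) * \<bar>\<Sum>k = 0..n - 4. acoef k * acoef (n - 4 - k)\<bar>"
    using a_rec[OF n4 n17] pos n4 by (simp add: abs_mult abs_of_pos)
  also have "\<dots> \<le> 6 / ((real n + 5) * (real n - 2)) * (sA / 4)"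
    using S pos by (intro mult_left_mono) auto
  also have "\<dots> = 3 / (2 * ((real n + 5) * (real n - 2))) * sA" by simp
  finally show ?thesis .
qed

lemma gamma: "(\<Sum>n=4..17. 3 / (2 * ((real n + 5) * (real n - 2)))) \<le> 29/100"
  by (simp add: sum.atLeast_Suc_atMost)

lemma sA_bound: "sA \<le> 2/3"
proof -
  have "sA = (\<Sum>k=0..3. \<bar>acoef k\<bar>) + (\<Sum>k=4..17. \<bar>acoef k\<bar>)"
  proof -
    have "{0..17::nat} = {0..3} \<union> {4..17}" by auto
    thus ?thesis unfolding sA_def by (simp only:) (rule sum.union_disjoint; auto)
  qed
  also have "(\<Sum>k=0..3. \<bar>acoef k\<bar>) = 385383/1616425 + 1/6 + 19949/321055"
    by (simp add: sum.atLeast_Suc_atMost a0 a1s a2s a3s)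
  also have "(\<Sum>k=4..17. \<bar>acoef k\<bar>) \<le> (\<Sum>n=4..17. 3 / (2 * ((real n + 5) * (real n - 2))) * sA)"
    by (rule sum_mono, rule a_lin) auto
  also have "\<dots> = (\<Sum>n=4..17. 3 / (2 * ((real n + 5) * (real n - 2)))) * sA"
    by (simp add: sum_distrib_right)
  also have "\<dots> \<le> 29/100 * sA"
    using gamma by (intro mult_right_mono) (auto simp: sA_def)
  finally show ?thesis by simp
qed

lemma A0: "Acoef 0 = 1" by (subst Acoef.simps) simp
lemma A_small: "0 < n \<Longrightarrow> n < 4 \<Longrightarrow> Acoef n = 0" by (subst Acoef.simps) simp
lemma A_rec: "4 \<le> n \<Longrightarrow> Acoef n = - 12 / (real n * (real n + 7)) *
             (\<Sum>k = 0..min (n - 4) 17. acoef k * Acoef (n - 4 - k))"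
  by (subst Acoef.simps) simp
lemma B0: "Bcoef 0 = 1" by (subst Bcoef.simps) simp
lemma B_small: "0 < n \<Longrightarrow> n < 4 \<or> n = 7 \<Longrightarrow> Bcoef n = 0" by (subst Bcoef.simps) auto
lemma B_rec: "4 \<le> n \<Longrightarrow> n \<noteq> 7 \<Longrightarrow> Bcoef n = - 12 / (real n * (real n - 7)) *
             (\<Sum>k = 0..min (n - 4) 17. acoef k * Bcoef (n - 4 - k))"
  by (subst Bcoef.simps) simp

lemma conv_bound:
  assumes "\<And>j. \<bar>f j\<bar> \<le> (1::real)"
  shows "\<bar>\<Sum>k = 0..min N 17. acoef k * f (N - k)\<bar> \<le> sA"
proof -
  have "\<bar>\<Sum>k = 0..min N 17. acoef k * f (N - k)\<bar> \<le> (\<Sum>k = 0..min N 17. \<bar>acoef k * f (N - k)\<bar>)"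
    by (rule sum_abs)
  also have "\<dots> \<le> (\<Sum>k = 0..min N 17. \<bar>acoef k\<bar>)"
  proof (rule sum_mono)
    fix k show "\<bar>acoef k * f (N - k)\<bar> \<le> \<bar>acoef k\<bar>"
      unfolding abs_mult using mult_left_mono[OF assms[of "N-k"] abs_ge_zero[of "acoef k"]] by simp
  qed
  also have "\<dots> \<le> sA" unfolding sA_def by (intro sum_mono2) auto
  finally show ?thesis .
qed

lemma A_bound: "\<bar>Acoef n\<bar> \<le> 1"
proof (induction n rule: less_induct)
  case (less n)
  show ?case
  proof (cases "n < 4")
    case True thus ?thesis using A0 A_small by (cases "n = 0") auto
  next
    case False
    hence n4: "4 \<le> n" by simp
    define f where "f j = (if j \<le> n - 4 then Acoef j else 0)" for j
    have fb: "\<bar>f j\<bar> \<le> 1" for j using less n4 by (auto simp: f_def)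
    have eq: "(\<Sum>k = 0..min (n - 4) 17. acoef k * Acoef (n - 4 - k)) = (\<Sum>k = 0..min (n - 4) 17. acoef k * f (n - 4 - k))"
      by (rule sum.cong) (auto simp: f_def)
    have S: "\<bar>\<Sum>k = 0..min (n - 4) 17. acoef k * Acoef (n - 4 - k)\<bar> \<le> 2/3"
      using conv_bound[of f "n-4", OF fb] sA_bound eq by simp
    have x4: "real n \<ge> 4" using n4 by simp
    have pos: "real n * (real n + 7) \<ge> 44"
    proof -
      have "real n * (real n + 7) \<ge> 4 * (4 + 7)" using x4 by (intro mult_mono) auto
      thus ?thesis by simp
    qed
    have "\<bar>Acoef n\<bar> = 12 / (real n * (real n + 7)) * \<bar>\<Sum>k = 0..min (n - 4) 17. acoef k * Acoef (n - 4 - k)\<bar>"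
      using A_rec[OF n4] pos by (simp add: abs_mult)
    also have "\<dots> \<le> 12 / 44 * (2/3)"
      using S pos by (intro mult_mono) (auto simp: field_simps)
    finally show ?thesis by simp
  qed
qed

lemma B_bound: "\<bar>Bcoef n\<bar> \<le> 1"
proof (induction n rule: less_induct)
  case (less n)
  show ?case
  proof (cases "n < 4 \<or> n = 7")
    case True thus ?thesis using B0 B_small by (cases "n = 0") auto
  next
    case False
    hence n4: "4 \<le> n" and n7: "n \<noteq> 7" by auto
    show ?thesis
    proof (cases "n \<le> 6")
      case True
      hence "n = 4 \<or> n = 5 \<or> n = 6" using n4 by auto
      moreover have "Bcoef (Suc 0) = 0" "Bcoef (Suc (Suc 0)) = 0" by (auto intro: B_small)
      moreover have "Bcoef 4 = acoef 0" using B_rec[of 4] B0 by simp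
      moreover have "Bcoef 5 = 6/5 * acoef 1" using B_rec[of 5] B0 \<open>Bcoef (Suc 0) = 0\<close>
        by (simp add: numeral_eq_Suc)
      moreover have "Bcoef 6 = 2 * acoef 2" using B_rec[of 6] B0 \<open>Bcoef (Suc 0) = 0\<close> \<open>Bcoef (Suc (Suc 0)) = 0\<close>
        by (simp add: numeral_eq_Suc)
      ultimately show ?thesis using a0 a1 a2 by auto
    next
      case False
      hence n8: "8 \<le> n" using n4 n7 by simp
      define f where "f j = (if j \<le> n - 4 then Bcoef j else 0)" for j
      have fb: "\<bar>f j\<bar> \<le> 1" for j using less n4 by (auto simp: f_def)
      have eq: "(\<Sum>k = 0..min (n - 4) 17. acoef k * Bcoef (n - 4 - k)) = (\<Sum>k = 0..min (n - 4) 17. acoef k * f (n - 4 - k))"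
        by (rule sum.cong) (auto simp: f_def)
      have S: "\<bar>\<Sum>k = 0..min (n - 4) 17. acoef k * Bcoef (n - 4 - k)\<bar> \<le> 2/3"
        using conv_bound[of f "n-4", OF fb] sA_bound eq by simp
      have x8: "real n \<ge> 8" using n8 by simp
      have pos: "real n * (real n - 7) \<ge> 8"
      proof -
        have "real n * (real n - 7) \<ge> 8 * 1" using x8 by (intro mult_mono) auto
        thus ?thesis by simp
      qed
      have "\<bar>Bcoef n\<bar> = 12 / (real n * (real n - 7)) * \<bar>\<Sum>k = 0..min (n - 4) 17. acoef k * Bcoef (n - 4 - k)\<bar>"
        using B_rec[OF n4 n7] pos x8 by (simp add: abs_mult abs_of_pos)
      also have "\<dots> \<le> 12 / 8 * (2/3)"
        using S pos by (intro mult_mono) (auto simp: field_simps)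
      finally show ?thesis by simp
    qed
  qed
qed

lemma conv_trunc: "(\<Sum>k = 0..N. acoef k * f k) = (\<Sum>k = 0..min N 17. acoef k * f k)"
proof (cases "N \<le> 17")
  case True thus ?thesis by simp
next
  case False
  hence "min N 17 = 17" by simp
  moreover have "(\<Sum>k = 0..N. acoef k * f k) = (\<Sum>k = 0..17. acoef k * f k)"
    using False by (intro sum.mono_neutral_right) (auto simp: a_big)
  ultimately show ?thesis by simp
qed

lemma A_ode: "real m * (real m + 7) * Acoef m + 12 * (\<Sum>k = 0..m - 4. acoef k * Acoef (m - 4 - k)) = 0"
  if "m \<ge> 4"
proof -
  have pos: "real m * (real m + 7) > 0" using that by simp
  have c: "(\<Sum>k = 0..m - 4. acoef k * Acoef (m - 4 - k)) = (\<Sum>k = 0..min (m - 4) 17. acoef k * Acoef (m - 4 - k))"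
    by (rule conv_trunc)
  show ?thesis unfolding c using A_rec[OF that] pos by (simp add: field_simps)
qed

lemma B_ode: "real m * (real m - 7) * Bcoef m + 12 * (\<Sum>k = 0..m - 4. acoef k * Bcoef (m - 4 - k)) = 0"
  if "m \<ge> 4"
proof (cases "m = 7")
  case True
  have "Bcoef (Suc 0) = 0" "Bcoef (Suc (Suc 0)) = 0" "Bcoef (Suc (Suc (Suc 0))) = 0" by (auto intro: B_small)
  thus ?thesis using True a3s by (simp add: numeral_eq_Suc)
next
  case False
  have pos: "real m * (real m - 7) \<noteq> 0" using that False by simp
  have c: "(\<Sum>k = 0..m - 4. acoef k * Bcoef (m - 4 - k)) = (\<Sum>k = 0..min (m - 4) 17. acoef k * Bcoef (m - 4 - k))"
    by (rule conv_trunc)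
  show ?thesis unfolding c using B_rec[OF that False] pos by (simp add: field_simps)
qed

definition FA :: "complex fps" where "FA = Abs_fps (\<lambda>n. complex_of_real (Acoef n))"
definition FB :: "complex fps" where "FB = Abs_fps (\<lambda>n. complex_of_real (Bcoef n))"
definition FP :: "complex fps" where "FP = Abs_fps (\<lambda>n. complex_of_real (acoef n))"

lemma radius_ge1:
  fixes c :: "nat \<Rightarrow> complex"
  assumes "\<And>n. norm (c n) \<le> 1"
  shows "fps_conv_radius (Abs_fps c) \<ge> 1"
  unfolding fps_conv_radius_def
proof (rule conv_radius_geI_ex')
  fix r :: real assume r: "0 < r" "ereal r < 1"
  hence r1: "r < 1" by simp
  show "summable (\<lambda>n. fps_nth (Abs_fps c) n * of_real r ^ n)"
  proof (rule summable_comparison_test[of _ "\<lambda>n. r ^ n"])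
    show "\<exists>N. \<forall>n\<ge>N. norm (fps_nth (Abs_fps c) n * of_real r ^ n) \<le> r ^ n"
      using r by (auto simp: norm_mult norm_power intro!: mult_left_le_one_le assms)
    show "summable (\<lambda>n. r ^ n)" using r r1 by (intro summable_geometric) auto
  qed
qed

lemma rad_FA: "fps_conv_radius FA \<ge> 1"
  unfolding FA_def by (rule radius_ge1) (use A_bound in simp)
lemma rad_FB: "fps_conv_radius FB \<ge> 1"
  unfolding FB_def by (rule radius_ge1) (use B_bound in simp)
lemma rad_FP: "fps_conv_radius FP \<ge> 1"
  unfolding FP_def proof (rule radius_ge1) fix n show "norm (complex_of_real (acoef n)) \<le> 1" using a_quarter[of n] by simp qed

lemma E1: "fps_X * fps_deriv (fps_deriv FA) + fps_const 8 * fps_deriv FA + fps_const 12 * (fps_X^3 * (FP * FA)) = 0"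
proof (rule fps_ext)
  fix n
  show "fps_nth (fps_X * fps_deriv (fps_deriv FA) + fps_const 8 * fps_deriv FA + fps_const 12 * (fps_X^3 * (FP * FA))) n = fps_nth 0 n"
  proof (cases "n < 3")
    case True
    have "Acoef (Suc n) = 0" using True by (intro A_small) auto
    thus ?thesis using True by (simp add: FA_def fps_X_power_mult_nth)
  next
    case False
    then obtain m where n: "n = m + 3" by (metis add.commute le_Suc_ex not_less)
    have h: "real (m+4) * (real (m+4) + 7) * Acoef (m+4) + 12 * (\<Sum>k = 0..m. acoef k * Acoef (m - k)) = 0"
      using A_ode[of "m+4"] by simp
    have h2: "complex_of_real (real (m+4) * (real (m+4) + 7) * Acoef (m+4) + 12 * (\<Sum>k = 0..m. acoef k * Acoef (m - k))) = 0"
      using h by simp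
    have "fps_nth (fps_X * fps_deriv (fps_deriv FA) + fps_const 8 * fps_deriv FA + fps_const 12 * (fps_X^3 * (FP * FA))) n
       = complex_of_real (real (m+4) * (real (m+4) + 7) * Acoef (m+4) + 12 * (\<Sum>k = 0..m. acoef k * Acoef (m - k)))"
    proof -
      have cv: "fps_nth (FP * FA) m = (\<Sum>k = 0..m. complex_of_real (acoef k * Acoef (m - k)))"
        by (simp add: fps_mult_nth FP_def FA_def)
      show ?thesis using n by (simp add: fps_X_power_mult_nth cv del: of_real_mult) (simp add: FA_def of_real_sum algebra_simps numeral_eq_Suc)
    qed
    thus ?thesis using h2 by simp
  qed
qed

lemma E2: "fps_X * fps_deriv (fps_deriv FB) + fps_const 12 * (fps_X^3 * (FP * FB)) = fps_const 6 * fps_deriv FB"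
proof (rule fps_ext)
  fix n
  show "fps_nth (fps_X * fps_deriv (fps_deriv FB) + fps_const 12 * (fps_X^3 * (FP * FB))) n = fps_nth (fps_const 6 * fps_deriv FB) n"
  proof (cases "n < 3")
    case True
    have "Bcoef (Suc n) = 0" using True by (intro B_small) auto
    thus ?thesis using True by (simp add: FB_def fps_X_power_mult_nth)
  next
    case False
    then obtain m where n: "n = m + 3" by (metis add.commute le_Suc_ex not_less)
    have h: "real (m+4) * (real (m+4) - 7) * Bcoef (m+4) + 12 * (\<Sum>k = 0..m. acoef k * Bcoef (m - k)) = 0"
      using B_ode[of "m+4"] by simp
    have h2: "complex_of_real (real (m+4) * (real (m+4) - 7) * Bcoef (m+4) + 12 * (\<Sum>k = 0..m. acoef k * Bcoef (m - k))) = 0"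
      using h by simp
    have "fps_nth (fps_X * fps_deriv (fps_deriv FB) + fps_const 12 * (fps_X^3 * (FP * FB))) n - fps_nth (fps_const 6 * fps_deriv FB) n
       = complex_of_real (real (m+4) * (real (m+4) - 7) * Bcoef (m+4) + 12 * (\<Sum>k = 0..m. acoef k * Bcoef (m - k)))"
    proof -
      have cv: "fps_nth (FP * FB) m = (\<Sum>k = 0..m. complex_of_real (acoef k * Bcoef (m - k)))"
        by (simp add: fps_mult_nth FP_def FB_def)
      show ?thesis using n by (simp add: fps_X_power_mult_nth cv del: of_real_mult) (simp add: FB_def of_real_sum algebra_simps numeral_eq_Suc)
    qed
    thus ?thesis using h2 by simp
  qed
qed

definition R1 :: "complex fps \<Rightarrow> bool" where "R1 F \<longleftrightarrow> fps_conv_radius F \<ge> 1"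

lemma R1_add[simp]: "R1 F \<Longrightarrow> R1 G \<Longrightarrow> R1 (F + G)"
  unfolding R1_def using fps_conv_radius_add[of F G] by (auto simp: min_def split: if_splits)
lemma R1_mult[simp]: "R1 F \<Longrightarrow> R1 G \<Longrightarrow> R1 (F * G)"
  unfolding R1_def using fps_conv_radius_mult[of F G] by (auto simp: min_def split: if_splits)
lemma R1_deriv[simp]: "R1 F \<Longrightarrow> R1 (fps_deriv F)"
  unfolding R1_def using fps_conv_radius_deriv[of F] by auto
lemma R1_X[simp]: "R1 fps_X" "R1 (fps_X ^ n)" "R1 (fps_const c)" "R1 0"
  unfolding R1_def by auto
lemma R1_base[simp]: "R1 FA" "R1 FB" "R1 FP"
  unfolding R1_def using rad_FA rad_FB rad_FP by auto

lemma R1_rad: "R1 F \<Longrightarrow> norm z < 1 \<Longrightarrow> ereal (norm z) < fps_conv_radius F"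
  unfolding R1_def by (rule less_le_trans[of _ 1]) auto

lemma ev_add[simp]: "R1 F \<Longrightarrow> R1 G \<Longrightarrow> norm z < 1 \<Longrightarrow> eval_fps (F + G) z = eval_fps F z + eval_fps G z"
  by (intro eval_fps_add R1_rad)
lemma ev_mult[simp]: "R1 F \<Longrightarrow> R1 G \<Longrightarrow> norm z < 1 \<Longrightarrow> eval_fps (F * G) z = eval_fps F z * eval_fps G z"
  by (intro eval_fps_mult R1_rad)

definition H1 where "H1 = eval_fps FA"
definition H1d where "H1d = eval_fps (fps_deriv FA)"
definition H1dd where "H1dd = eval_fps (fps_deriv (fps_deriv FA))"
definition H2 where "H2 = eval_fps FB"
definition H2d where "H2d = eval_fps (fps_deriv FB)"
definition H2dd where "H2dd = eval_fps (fps_deriv (fps_deriv FB))"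

lemma P_eq: "eval_fps FP z = Ppoly z"
  unfolding eval_fps_def Ppoly_def FP_def
  by (subst suminf_finite[of "{0..17}"]) (auto simp: a_big)

lemma ODE1: "norm z < 1 \<Longrightarrow> z * H1dd z + 8 * H1d z + 12 * (z^3 * (Ppoly z * H1 z)) = 0"
  using arg_cong[OF E1, of "\<lambda>F. eval_fps F z"]
  by (simp add: H1_def H1d_def H1dd_def P_eq)

lemma ODE2: "norm z < 1 \<Longrightarrow> z * H2dd z + 12 * (z^3 * (Ppoly z * H2 z)) = 6 * H2d z"
  using arg_cong[OF E2, of "\<lambda>F. eval_fps F z"]
  by (simp add: H2_def H2d_def H2dd_def P_eq)

lemma der_gen: "R1 F \<Longrightarrow> norm w < 1 \<Longrightarrow> (eval_fps F has_field_derivative eval_fps (fps_deriv F) w) (at w)"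
  by (intro has_field_derivative_eval_fps R1_rad)

lemma H1_der: "norm w < 1 \<Longrightarrow> (H1 has_field_derivative H1d w) (at w)"
  unfolding H1_def H1d_def by (rule der_gen) auto
lemma H1d_der: "norm w < 1 \<Longrightarrow> (H1d has_field_derivative H1dd w) (at w)"
  unfolding H1d_def H1dd_def by (rule der_gen) auto
lemma H2_der: "norm w < 1 \<Longrightarrow> (H2 has_field_derivative H2d w) (at w)"
  unfolding H2_def H2d_def by (rule der_gen) auto
lemma H2d_der: "norm w < 1 \<Longrightarrow> (H2d has_field_derivative H2dd w) (at w)"
  unfolding H2d_def H2dd_def by (rule der_gen) auto

lemma sumA: "norm z < 1 \<Longrightarrow> summable (\<lambda>n. complex_of_real (Acoef n) * z ^ n)"
  using summable_fps[OF R1_rad[OF R1_base(1)]] by (simp add: FA_def)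
lemma sumB: "norm z < 1 \<Longrightarrow> summable (\<lambda>n. complex_of_real (Bcoef n) * z ^ n)"
  using summable_fps[OF R1_rad[OF R1_base(2)]] by (simp add: FB_def)

lemma G1_eq: "norm z < 1 \<Longrightarrow> G1 z = z^4 * H1 z"
proof -
  assume z: "norm z < 1"
  have "G1 z = (\<Sum>n. z^4 * (complex_of_real (Acoef n) * z ^ n))"
    unfolding G1_def by (simp add: power_add algebra_simps)
  also have "\<dots> = z^4 * (\<Sum>n. complex_of_real (Acoef n) * z ^ n)"
    by (rule suminf_mult[OF sumA[OF z]])
  finally show ?thesis by (simp add: H1_def eval_fps_def FA_def)
qed

lemma G2_eq: "norm z < 1 \<Longrightarrow> z \<noteq> 0 \<Longrightarrow> G2 z = H2 z / z^3"
proof -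
  assume z: "norm z < 1" "z \<noteq> 0"
  have pw: "z powi (int n - 3) = z^n / z^3" for n
    using z by (simp add: power_int_diff)
  have "G2 z = (\<Sum>n. (complex_of_real (Bcoef n) * z ^ n) / z^3)"
    unfolding G2_def pw by simp
  also have "\<dots> = (\<Sum>n. complex_of_real (Bcoef n) * z ^ n) / z^3"
    by (rule suminf_divide[OF sumB[OF z(1)]])
  finally show ?thesis by (simp add: H2_def eval_fps_def FB_def)
qed

definition g1d where "g1d w = 4*w^3*H1 w + w^4*H1d w"
definition g1dd where "g1dd w = 12*w^2*H1 w + 8*w^3*H1d w + w^4*H1dd w"
definition g2d where "g2d w = H2d w / w^3 - 3*H2 w / w^4"
definition g2dd where "g2dd w = H2dd w / w^3 - 6*H2d w / w^4 + 12*H2 w / w^5"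

lemma G1_der: "norm w < 1 \<Longrightarrow> (G1 has_field_derivative g1d w) (at w)"
proof -
  assume w: "norm w < 1"
  have "((\<lambda>w. w^4 * H1 w) has_field_derivative g1d w) (at w)"
    unfolding g1d_def using w by (auto intro!: derivative_eq_intros H1_der simp: algebra_simps)
  thus ?thesis
    by (rule has_field_derivative_transform_within_open[of _ _ _ "ball 0 1"]) (use w in \<open>auto simp: G1_eq\<close>)
qed

lemma g1d_der: "norm w < 1 \<Longrightarrow> (g1d has_field_derivative g1dd w) (at w)"
proof -
  assume w: "norm w < 1"
  have "((\<lambda>w. 4*w^3*H1 w + w^4*H1d w) has_field_derivative g1dd w) (at w)"
    unfolding g1dd_def using w by (auto intro!: derivative_eq_intros H1_der H1d_der simp: algebra_simps)
  thus ?thesis unfolding g1d_def[abs_def] .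
qed

lemma G2_der: "norm w < 1 \<Longrightarrow> w \<noteq> 0 \<Longrightarrow> (G2 has_field_derivative g2d w) (at w)"
proof -
  assume w: "norm w < 1" "w \<noteq> 0"
  have "((\<lambda>w. H2 w / w^3) has_field_derivative g2d w) (at w)"
    unfolding g2d_def using w by (auto intro!: derivative_eq_intros H2_der simp: field_simps)
  thus ?thesis
    by (rule has_field_derivative_transform_within_open[of _ _ _ "ball 0 1 - {0}"]) (use w in \<open>auto simp: G2_eq\<close>)
qed

lemma g2d_der: "norm w < 1 \<Longrightarrow> w \<noteq> 0 \<Longrightarrow> (g2d has_field_derivative g2dd w) (at w)"
proof -
  assume w: "norm w < 1" "w \<noteq> 0"
  have "((\<lambda>w. H2d w / w^3 - 3*H2 w / w^4) has_field_derivative g2dd w) (at w)"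
    unfolding g2dd_def using w by (auto intro!: derivative_eq_intros H2_der H2d_der simp: field_simps)
  thus ?thesis unfolding g2d_def[abs_def] .
qed

definition Wt where "Wt w = w*(H1 w*H2d w - H2 w*H1d w) - 7*H1 w*H2 w"

lemma Wt_der: "norm w < 1 \<Longrightarrow> (Wt has_field_derivative 0) (at w)"
proof -
  assume w: "norm w < 1"
  have e1: "w*H1dd w = -8*H1d w - 12*(w^3*(Ppoly w*H1 w))" using ODE1[OF w] by algebra
  have e2: "w*H2dd w = 6*H2d w - 12*(w^3*(Ppoly w*H2 w))" using ODE2[OF w] by algebra
  have "(Wt has_field_derivative
      (H1 w*H2d w - H2 w*H1d w) + w*(H1d w*H2d w + H1 w*H2dd w - (H2d w*H1d w + H2 w*H1dd w))
        - 7*(H1d w*H2 w + H1 w*H2d w)) (at w)"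
    unfolding Wt_def[abs_def] using w
    by (auto intro!: derivative_eq_intros H1_der H1d_der H2_der H2d_der simp: algebra_simps)
  moreover have "(H1 w*H2d w - H2 w*H1d w) + w*(H1d w*H2d w + H1 w*H2dd w - (H2d w*H1d w + H2 w*H1dd w))
        - 7*(H1d w*H2 w + H1 w*H2d w)
      = (H1 w*H2d w - H2 w*H1d w) + H1 w*(w*H2dd w) - H2 w*(w*H1dd w) - 7*(H1d w*H2 w + H1 w*H2d w)"
    by algebra
  moreover have "\<dots> = 0" unfolding e1 e2 by algebra
  ultimately show ?thesis by simp
qed

lemma Wt_const: "norm w < 1 \<Longrightarrow> Wt w = -7"
proof -
  assume w: "norm w < 1"
  obtain c where c: "\<forall>x\<in>ball 0 1. Wt x = c"
    using has_field_derivative_zero_constant[of "ball (0::complex) 1" Wt]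
    by (metis Wt_der convex_ball has_field_derivative_at_within mem_ball_0)
  have "Wt 0 = -7"
    by (simp add: Wt_def H1_def H2_def eval_fps_at_0 FA_def FB_def A0 B0)
  thus ?thesis using c w by force
qed

lemma indep_aux:
  assumes hol: "F holomorphic_on ball 0 1" and zero: "\<And>z. cmod z = r6 \<Longrightarrow> F z = 0"
  shows "F 0 = 0"
proof -
  have r: "0 < r6" "r6 < 1" by (auto simp: r6_def)
  have "norm (F 0) \<le> 0"
  proof (rule maximum_modulus_frontier[of F "ball 0 r6"])
    show "F holomorphic_on interior (ball 0 r6)"
      using hol r by (auto intro: holomorphic_on_subset)
    show "continuous_on (closure (ball 0 r6)) F"
      using r by (auto intro!: holomorphic_on_imp_continuous_on holomorphic_on_subset[OF hol])
  qed (use r zero in auto)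
  thus ?thesis by simp
qed

lemma H_hol: "H1 holomorphic_on ball 0 1" "H2 holomorphic_on ball 0 1"
  by (auto simp: holomorphic_on_open intro!: exI H1_der H2_der)

theorem lemma6p7:
  shows "(\<exists>S. open S \<and> sphere 0 r6 \<subseteq> S \<and> G1 holomorphic_on S \<and> G2 holomorphic_on S)
    \<and> (\<forall>z. cmod z = r6 \<longrightarrow>
          summable (\<lambda>n. complex_of_real (Acoef n) * z ^ (4 + n))
        \<and> summable (\<lambda>n. complex_of_real (Bcoef n) * z powi (int n - 3))
        \<and> deriv (deriv G1) z + 12 * Y0 z * G1 z = 0
        \<and> deriv (deriv G2) z + 12 * Y0 z * G2 z = 0
        \<and> G1 z * deriv G2 z - G2 z * deriv G1 z = - 7)
    \<and> (\<forall>c1 c2 :: complex. (\<forall>z. cmod z = r6 \<longrightarrow> c1 * G1 z + c2 * G2 z = 0)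
          \<longrightarrow> c1 = 0 \<and> c2 = 0)"
proof (intro conjI allI impI)
  have r: "0 < r6" "r6 < 1" by (auto simp: r6_def)
  define S where "S = ball (0::complex) 1 - {0}"
  have oS: "open S" unfolding S_def by auto
  have inS: "w \<in> S \<longleftrightarrow> norm w < 1 \<and> w \<noteq> 0" for w unfolding S_def by auto
  show "\<exists>S. open S \<and> sphere 0 r6 \<subseteq> S \<and> G1 holomorphic_on S \<and> G2 holomorphic_on S"
  proof (intro exI conjI)
    show "open S" by (rule oS)
    show "sphere 0 r6 \<subseteq> S" using r by (auto simp: inS)
    show "G1 holomorphic_on S" using oS by (auto simp: holomorphic_on_open inS intro!: exI G1_der)
    show "G2 holomorphic_on S" using oS by (auto simp: holomorphic_on_open inS intro!: exI G2_der)
  qed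
  fix z :: complex assume z: "cmod z = r6"
  have z1: "norm z < 1" and z0: "z \<noteq> 0" using z r by auto
  show "summable (\<lambda>n. complex_of_real (Acoef n) * z ^ (4 + n))"
    using summable_mult[OF sumA[OF z1], of "z^4"] by (simp add: power_add algebra_simps)
  show "summable (\<lambda>n. complex_of_real (Bcoef n) * z powi (int n - 3))"
    using summable_divide[OF sumB[OF z1], of "z^3"] z0 by (simp add: power_int_diff)
  have dG1: "deriv G1 w = g1d w" if "norm w < 1" for w using G1_der[OF that] by (rule DERIV_imp_deriv)
  have dG2: "deriv G2 w = g2d w" if "w \<in> S" for w using G2_der that by (auto simp: inS intro: DERIV_imp_deriv)
  have ddG1: "deriv (deriv G1) z = g1dd z"
  proof -
    have "eventually (\<lambda>w. w \<in> ball 0 1) (nhds z)" using z1 by (intro eventually_nhds_in_open) auto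
    hence "eventually (\<lambda>w. deriv G1 w = g1d w) (nhds z)" by eventually_elim (simp add: dG1)
    hence "deriv (deriv G1) z = deriv g1d z" by (rule deriv_cong_ev) simp
    thus ?thesis using DERIV_imp_deriv[OF g1d_der[OF z1]] by simp
  qed
  have ddG2: "deriv (deriv G2) z = g2dd z"
  proof -
    have "eventually (\<lambda>w. w \<in> S) (nhds z)" using z1 z0 oS by (intro eventually_nhds_in_open) (auto simp: inS)
    hence "eventually (\<lambda>w. deriv G2 w = g2d w) (nhds z)" by eventually_elim (simp add: dG2)
    hence "deriv (deriv G2) z = deriv g2d z" by (rule deriv_cong_ev) simp
    thus ?thesis using DERIV_imp_deriv[OF g2d_der[OF z1 z0]] by simp
  qed
  show "deriv (deriv G1) z + 12 * Y0 z * G1 z = 0"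
  proof -
    have "deriv (deriv G1) z + 12 * Y0 z * G1 z = z^3 * (z * H1dd z + 8 * H1d z + 12 * (z^3 * (Ppoly z * H1 z)))"
      unfolding ddG1 G1_eq[OF z1] g1dd_def Y0_def using z0 by (simp add: field_simps power2_eq_square power3_eq_cube power4_eq_xxxx)
    thus ?thesis using ODE1[OF z1] by simp
  qed
  show "deriv (deriv G2) z + 12 * Y0 z * G2 z = 0"
  proof -
    have p5: "z ^ 5 = z * (z * (z * (z * z)))" by (simp add: numeral_eq_Suc)
    have "deriv (deriv G2) z + 12 * Y0 z * G2 z = (z * H2dd z + 12 * (z^3 * (Ppoly z * H2 z)) - 6 * H2d z) / z^4"
      unfolding ddG2 G2_eq[OF z1 z0] g2dd_def Y0_def using z0 p5 by (simp add: field_simps power2_eq_square power3_eq_cube power4_eq_xxxx)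
    thus ?thesis using ODE2[OF z1] by simp
  qed
  show "G1 z * deriv G2 z - G2 z * deriv G1 z = - 7"
  proof -
    have "G1 z * deriv G2 z - G2 z * deriv G1 z = Wt z"
      unfolding dG1[OF z1] dG2[of z, unfolded inS, OF conjI[OF z1 z0]] G1_eq[OF z1] G2_eq[OF z1 z0] g1d_def g2d_def Wt_def
      using z0 by (simp add: field_simps power2_eq_square power3_eq_cube power4_eq_xxxx)
    thus ?thesis using Wt_const[OF z1] by simp
  qed
next
  fix c1 c2 :: complex
  assume h: "\<forall>z. cmod z = r6 \<longrightarrow> c1 * G1 z + c2 * G2 z = 0"
  have r: "0 < r6" "r6 < 1" by (auto simp: r6_def)
  have onS: "c1 * z^7 * H1 z + c2 * H2 z = 0" if "cmod z = r6" for z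
  proof -
    have z1: "norm z < 1" and z0: "z \<noteq> 0" using that r by auto
    have "c1 * z^4 * H1 z + c2 * (H2 z / z^3) = 0" using h[rule_format, OF that] G1_eq[OF z1] G2_eq[OF z1 z0] by (simp add: mult.assoc)
    hence e1: "z^3 * (c1 * z^4 * H1 z + c2 * (H2 z / z^3)) = 0" by simp
    have e2: "z^3 * (c1 * z^4 * H1 z + c2 * (H2 z / z^3)) = c1 * (z^3 * z^4) * H1 z + c2 * H2 z"
      using z0 by (simp add: distrib_left mult_ac)
    have e3: "z^3 * z^4 = z^7" by (simp flip: power_add)
    show ?thesis using e1 e2 e3 by metis
  qed
  have "(\<lambda>z. c1 * z^7 * H1 z + c2 * H2 z) 0 = 0"
    by (rule indep_aux) (use onS H_hol in \<open>auto intro!: holomorphic_intros\<close>)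
  hence c2: "c2 = 0" by (simp add: H2_def eval_fps_at_0 FB_def B0)
  have on2: "c1 * H1 z = 0" if "cmod z = r6" for z
    using onS[OF that] c2 that r by auto
  have "(\<lambda>z. c1 * H1 z) 0 = 0"
    by (rule indep_aux[of "\<lambda>z. c1 * H1 z"]) (use on2 H_hol in \<open>auto intro!: holomorphic_intros\<close>)
  thus "c1 = 0" by (simp add: H1_def eval_fps_at_0 FA_def A0)
  show "c2 = 0" by (rule c2)
qed
end
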